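(* Every PCMC model exhibits uniform expansion. Precisely: let $U_1=\{1,\dots,n\}$ carry a PCMC rate family $(q_{mm'})_{m\ne m'}$, and for $k\ge 1$ let $U_k=\{(m,j):1\le m\le n,\ 1\le j\le k\}$ carry a PCMC rate family $(q^{(k)}_{xy})_{x\neq y}$ such that $q^{(k)}_{(m,j),(m',j')}=q_{mm'}$ whenever $m\neq m'$, and $q^{(k)}_{(m,j),(m,j')}=q^{(k)}_{(m,j'),(m,j)}$ for $j\neq j'$ (so the $k$ elements $(m,1),\dots,(m,k)$ are copies of one another). Then for every $m\in\{1,\dots,n\}$, \[p_{m,U_1}=\sum_{j=1}^k p_{(m,j),U_k},\] where $p_{m,U_1}$ and $p_{(m,j),U_k}$ are the PCMC choice probabilities in the respective models.
   Context: Pairwise Choice Markov Chain (PCMC) model: on a finite set $U$ of alternatives, the parameters are off-diagonal rates $q_{ij}\ge 0$ ($i\neq j\in U$) subject to $q_{ij}+q_{ji}\ge 1$ for all distinct $i,j$. $Q_U$ is the $U\times U$ matrix with these off-diagonal entries and diagonal entries $q_{ii}=-\sum_{j\neq i} q_{ij}$; $\pi_U$ is the unique probability vector with $\pi_U^TQ_U=0$, and the choice probability of $i$ from $U$ is $p_{iU}=\pi_U(i)$. Two elements $i,j$ of a set $S$ are copies if $q_{ik}=q_{jk}$ for all $k\in S\setminus\{i,j\}$ and $q_{ij}=q_{ji}$. Uniform expansion is the property that the probability of choosing some copy of an item from a set containing $k$ copies of each of $n$ items equals the probability of choosing that item from the set with one copy of each. *)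

theory Defs
  imports Complex_Main
begin

definition pcmc_rates :: "'a set \<Rightarrow> ('a \<Rightarrow> 'a \<Rightarrow> real) \<Rightarrow> bool" where
  "pcmc_rates U q \<longleftrightarrow> finite U \<and>
     (\<forall>i\<in>U. \<forall>j\<in>U. i \<noteq> j \<longrightarrow> q i j \<ge> 0 \<and> q i j + q j i \<ge> 1)"

definition Q_matrix :: "'a set \<Rightarrow> ('a \<Rightarrow> 'a \<Rightarrow> real) \<Rightarrow> 'a \<Rightarrow> 'a \<Rightarrow> real" where
  "Q_matrix U q i j = (if i = j then - (\<Sum>k\<in>U - {i}. q i k) else q i j)"

definition stationary_dist :: "'a set \<Rightarrow> ('a \<Rightarrow> 'a \<Rightarrow> real) \<Rightarrow> ('a \<Rightarrow> real) \<Rightarrow> bool" where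
  "stationary_dist U q \<pi> \<longleftrightarrow>
     (\<forall>i\<in>U. \<pi> i \<ge> 0) \<and> (\<forall>i. i \<notin> U \<longrightarrow> \<pi> i = 0) \<and> (\<Sum>i\<in>U. \<pi> i) = 1 \<and>
     (\<forall>j\<in>U. (\<Sum>i\<in>U. \<pi> i * Q_matrix U q i j) = 0)"

definition pcmc_pi :: "'a set \<Rightarrow> ('a \<Rightarrow> 'a \<Rightarrow> real) \<Rightarrow> 'a \<Rightarrow> real" where
  "pcmc_pi U q = (THE \<pi>. stationary_dist U q \<pi>)"

definition pcmc_prob :: "'a set \<Rightarrow> ('a \<Rightarrow> 'a \<Rightarrow> real) \<Rightarrow> 'a \<Rightarrow> real" where
  "pcmc_prob U q i = pcmc_pi U q i"

end

theory Submission
  imports Defs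
begin

definition bal :: "'a set \<Rightarrow> ('a \<Rightarrow> 'a \<Rightarrow> real) \<Rightarrow> ('a \<Rightarrow> real) \<Rightarrow> bool" where
  "bal U q p \<longleftrightarrow> (\<forall>j\<in>U. (\<Sum>i\<in>U-{j}. p i * q i j) = p j * (\<Sum>k\<in>U-{j}. q j k))"

definition pc :: "'a set \<Rightarrow> ('a \<Rightarrow> 'a \<Rightarrow> real) \<Rightarrow> bool" where
  "pc U q \<longleftrightarrow> (\<forall>i\<in>U. \<forall>j\<in>U. i \<noteq> j \<longrightarrow> q i j \<ge> 0 \<and> q i j + q j i \<ge> 1)"

definition dd :: "'a set \<Rightarrow> ('a \<Rightarrow> 'a \<Rightarrow> real) \<Rightarrow> 'a \<Rightarrow> real" where
  "dd U q s = (\<Sum>k\<in>U-{s}. q s k)"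

definition cens :: "'a set \<Rightarrow> ('a \<Rightarrow> 'a \<Rightarrow> real) \<Rightarrow> 'a \<Rightarrow> 'a \<Rightarrow> 'a \<Rightarrow> real" where
  "cens U q s i j = q i j + q i s * q s j / dd U q s"

lemma Q_sum:
  assumes "finite U" "j \<in> U"
  shows "(\<Sum>i\<in>U. p i * Q_matrix U q i j) = (\<Sum>i\<in>U-{j}. p i * q i j) - p j * (\<Sum>k\<in>U-{j}. q j k)"
proof -
  have "(\<Sum>i\<in>U. p i * Q_matrix U q i j) = p j * Q_matrix U q j j + (\<Sum>i\<in>U-{j}. p i * Q_matrix U q i j)"
    using assms by (simp add: sum.remove)
  also have "(\<Sum>i\<in>U-{j}. p i * Q_matrix U q i j) = (\<Sum>i\<in>U-{j}. p i * q i j)"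
    by (rule sum.cong) (auto simp: Q_matrix_def)
  finally show ?thesis by (simp add: Q_matrix_def)
qed

lemma stat_iff:
  assumes "finite U"
  shows "stationary_dist U q p \<longleftrightarrow> (\<forall>i\<in>U. p i \<ge> 0) \<and> (\<forall>i. i \<notin> U \<longrightarrow> p i = 0) \<and> sum p U = 1 \<and> bal U q p"
  using assms by (simp add: stationary_dist_def bal_def Q_sum)

lemma bal_scale: "bal U q p \<Longrightarrow> bal U q (\<lambda>i. c * p i)"
  unfolding bal_def
proof
  fix j assume h: "\<forall>j\<in>U. (\<Sum>i\<in>U-{j}. p i * q i j) = p j * (\<Sum>k\<in>U-{j}. q j k)" and j: "j \<in> U"
  have "(\<Sum>i\<in>U-{j}. c * p i * q i j) = c * (\<Sum>i\<in>U-{j}. p i * q i j)"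
    by (simp add: sum_distrib_left mult.assoc)
  also have "\<dots> = c * p j * (\<Sum>k\<in>U-{j}. q j k)" using h j by simp
  finally show "(\<Sum>i\<in>U-{j}. c * p i * q i j) = c * p j * (\<Sum>k\<in>U-{j}. q j k)" .
qed

lemma cens_ident:
  assumes U: "finite U" and s: "s \<in> U" and j: "j \<in> U" "j \<noteq> s" and d: "dd U q s \<noteq> 0"
    and hs: "p s * dd U q s = (\<Sum>i\<in>U-{s}. p i * q i s)"
  shows "(\<Sum>i\<in>U-{j}. p i * q i j) - p j * (\<Sum>k\<in>U-{j}. q j k)
       = (\<Sum>i\<in>U-{s}-{j}. p i * cens U q s i j) - p j * (\<Sum>k\<in>U-{s}-{j}. cens U q s j k)"
proof -
  define V where "V = U - {s}"
  define d where "d = dd U q s"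
  have fV: "finite (V - {j})" using U by (simp add: V_def)
  have e1: "U - {j} = insert s (V - {j})" using s j by (auto simp: V_def)
  have e2: "V = insert j (V - {j})" using j by (auto simp: V_def)
  have h1: "(\<Sum>i\<in>U-{j}. p i * q i j) = p s * q s j + (\<Sum>i\<in>V-{j}. p i * q i j)"
    unfolding e1 using fV by (subst sum.insert) (auto simp: V_def)
  have h2: "(\<Sum>k\<in>U-{j}. q j k) = q j s + (\<Sum>k\<in>V-{j}. q j k)"
    unfolding e1 using fV by (subst sum.insert) (auto simp: V_def)
  have h3: "(\<Sum>i\<in>V-{j}. p i * cens U q s i j) = (\<Sum>i\<in>V-{j}. p i * q i j) + (\<Sum>i\<in>V-{j}. p i * q i s) * q s j / d"
    by (simp add: cens_def d_def distrib_left sum.distrib sum_distrib_right sum_divide_distrib mult.assoc)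
  have h4: "(\<Sum>k\<in>V-{j}. cens U q s j k) = (\<Sum>k\<in>V-{j}. q j k) + q j s * (\<Sum>k\<in>V-{j}. q s k) / d"
    by (simp add: cens_def d_def sum.distrib sum_distrib_left sum_divide_distrib)
  have h5: "d = q s j + (\<Sum>k\<in>V-{j}. q s k)"
    unfolding d_def dd_def V_def[symmetric] using U j by (subst sum.remove[of V j]) (auto simp: V_def)
  have h6: "(\<Sum>i\<in>V. p i * q i s) = p j * q j s + (\<Sum>i\<in>V-{j}. p i * q i s)"
    using U j by (subst sum.remove[of V j]) (auto simp: V_def)
  have hs': "p s * d = p j * q j s + (\<Sum>i\<in>V-{j}. p i * q i s)"
    using hs h6 by (simp add: d_def V_def)
  have dn: "d \<noteq> 0" using d by (simp add: d_def)
  have ps: "p s = (p j * q j s + (\<Sum>i\<in>V-{j}. p i * q i s)) / d"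
    using hs' dn by (simp add: field_simps)
  have h4': "(\<Sum>k\<in>V-{j}. cens U q s j k) = (\<Sum>k\<in>V-{j}. q j k) + q j s * (d - q s j) / d"
    using h4 h5 by simp
  show ?thesis
    unfolding V_def[symmetric] h1 h2 h3 h4' ps
    using dn by (simp add: field_simps)
qed


lemma bal_at_s:
  assumes "bal U q p" "s \<in> U"
  shows "p s * dd U q s = (\<Sum>i\<in>U-{s}. p i * q i s)"
  using assms by (simp add: bal_def dd_def)

lemma cens_bal_back:
  assumes U: "finite U" and s: "s \<in> U" and d: "dd U q s \<noteq> 0" and b: "bal U q p"
  shows "bal (U-{s}) (cens U q s) p"
  unfolding bal_def
proof
  fix j assume j: "j \<in> U - {s}"
  have "(\<Sum>i\<in>U-{j}. p i * q i j) - p j * (\<Sum>k\<in>U-{j}. q j k) = 0"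
    using b j by (simp add: bal_def)
  with cens_ident[OF U s _ _ d bal_at_s[OF b s], of j] j
  show "(\<Sum>i\<in>U-{s}-{j}. p i * cens U q s i j) = p j * (\<Sum>k\<in>U-{s}-{j}. cens U q s j k)"
    by simp
qed

lemma cens_bal_fwd:
  assumes U: "finite U" and s: "s \<in> U" and d: "dd U q s \<noteq> 0" and b: "bal (U-{s}) (cens U q s) r"
  defines "p \<equiv> (\<lambda>i. if i = s then (\<Sum>i\<in>U-{s}. r i * q i s) / dd U q s else r i)"
  shows "bal U q p"
  unfolding bal_def
proof
  fix j assume j: "j \<in> U"
  have hs: "p s * dd U q s = (\<Sum>i\<in>U-{s}. p i * q i s)"
  proof -
    have "(\<Sum>i\<in>U-{s}. p i * q i s) = (\<Sum>i\<in>U-{s}. r i * q i s)"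
      by (rule sum.cong) (auto simp: p_def)
    then show ?thesis using d by (simp add: p_def)
  qed
  show "(\<Sum>i\<in>U-{j}. p i * q i j) = p j * (\<Sum>k\<in>U-{j}. q j k)"
  proof (cases "j = s")
    case True
    then show ?thesis using hs by (simp add: dd_def)
  next
    case False
    have "(\<Sum>i\<in>U-{s}-{j}. p i * cens U q s i j) = (\<Sum>i\<in>U-{s}-{j}. r i * cens U q s i j)"
      by (rule sum.cong) (auto simp: p_def)
    also have "\<dots> = r j * (\<Sum>k\<in>U-{s}-{j}. cens U q s j k)"
      using b j False by (simp add: bal_def)
    finally have "(\<Sum>i\<in>U-{s}-{j}. p i * cens U q s i j) - p j * (\<Sum>k\<in>U-{s}-{j}. cens U q s j k) = 0"
      using False by (simp add: p_def)
    with cens_ident[OF U s j False d hs] show ?thesis by simp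
  qed
qed

lemma pc_cens:
  assumes "pc U q" "s \<in> U" "dd U q s > 0"
  shows "pc (U-{s}) (cens U q s)"
  unfolding pc_def
proof (intro ballI impI)
  fix i j assume i: "i \<in> U-{s}" and j: "j \<in> U-{s}" and ij: "i \<noteq> j"
  have a: "q i s \<ge> 0" "q s j \<ge> 0" "q j s \<ge> 0" "q s i \<ge> 0" "q i j \<ge> 0" "q i j + q j i \<ge> 1"
    using assms(1,2) i j ij unfolding pc_def by auto
  have "q i s * q s j / dd U q s \<ge> 0" "q j s * q s i / dd U q s \<ge> 0"
    using a assms(3) by auto
  then show "0 \<le> cens U q s i j \<and> 1 \<le> cens U q s i j + cens U q s j i"
    using a unfolding cens_def by linarith
qed

lemma exists_pos_d:
  assumes f: "finite U" and pc: "pc U q" and c: "card U \<ge> 2"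
  obtains s where "s \<in> U" "dd U q s > 0"
proof -
  obtain a b where ab: "a \<in> U" "b \<in> U" "a \<noteq> b"
  proof -
    from c have "\<not> card U \<le> 1" by simp
    then have "\<not> (\<forall>x\<in>U. \<forall>y\<in>U. x = y)" using card_le_Suc0_iff_eq[OF f] by simp
    then show ?thesis using that by blast
  qed
  have pos: "\<And>x y. x \<in> U \<Longrightarrow> y \<in> U \<Longrightarrow> x \<noteq> y \<Longrightarrow> q x y > 0 \<Longrightarrow> dd U q x > 0"
  proof -
    fix x y assume x: "x \<in> U" and y: "y \<in> U" and xy: "x \<noteq> y" and qp: "q x y > 0"
    have "q x y \<le> (\<Sum>k\<in>U-{x}. q x k)"
      by (rule member_le_sum) (use f y xy pc x in \<open>auto simp: pc_def\<close>)
    then show "dd U q x > 0" using qp by (simp add: dd_def)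
  qed
  have "q a b + q b a \<ge> 1" using pc ab by (auto simp: pc_def)
  then have "q a b > 0 \<or> q b a > 0" by linarith
  then show ?thesis using pos ab that by metis
qed

lemma main_ind:
  "\<forall>U q. card U = N \<longrightarrow> finite U \<longrightarrow> U \<noteq> {} \<longrightarrow> pc U q \<longrightarrow>
     (\<exists>p. (\<forall>i\<in>U. p i \<ge> 0) \<and> sum p U = 1 \<and> bal U q p) \<and>
     (\<forall>p p'. (\<forall>i\<in>U. p i \<ge> 0) \<and> sum p U = 1 \<and> bal U q p \<longrightarrow>
             (\<forall>i\<in>U. p' i \<ge> 0) \<and> sum p' U = 1 \<and> bal U q p' \<longrightarrow> (\<forall>i\<in>U. p i = p' i))"
proof (induction N rule: less_induct)
  case (less N)
  show ?case
  proof (intro allI impI)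
    fix U :: "'a set" and q
    assume cU: "card U = N" and f: "finite U" and ne: "U \<noteq> {}" and pc: "pc U q"
    show "(\<exists>p. (\<forall>i\<in>U. p i \<ge> 0) \<and> sum p U = 1 \<and> bal U q p) \<and>
     (\<forall>p p'. (\<forall>i\<in>U. p i \<ge> 0) \<and> sum p U = 1 \<and> bal U q p \<longrightarrow>
             (\<forall>i\<in>U. p' i \<ge> 0) \<and> sum p' U = 1 \<and> bal U q p' \<longrightarrow> (\<forall>i\<in>U. p i = p' i))"
    proof (cases "card U \<le> 1")
      case True
      then obtain a where Ua: "U = {a}" using ne f
        by (metis card_0_eq card_1_singletonE le_SucE le_zero_eq One_nat_def)
      show ?thesis
      proof
        show "\<exists>p. (\<forall>i\<in>U. p i \<ge> 0) \<and> sum p U = 1 \<and> bal U q p"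
          by (rule exI[of _ "\<lambda>i. 1"]) (simp add: Ua bal_def)
      qed (simp add: Ua)
    next
      case False
      then have c2: "card U \<ge> 2" by simp
      obtain s where s: "s \<in> U" and dpos: "dd U q s > 0" using exists_pos_d[OF f pc c2] by blast
      have dn: "dd U q s \<noteq> 0" using dpos by simp
      define V where "V = U - {s}"
      have fV: "finite V" using f by (simp add: V_def)
      have cV: "card V < N" using cU s f c2 by (simp add: V_def card_Diff1_less)
      have neV: "V \<noteq> {}" 
      proof -
        have "card V = card U - 1" using f s by (simp add: V_def)
        then have "card V \<ge> 1" using c2 by simp
        then show ?thesis by auto
      qed
      have pcV: "pc V (cens U q s)" using pc_cens[OF pc s dpos] by (simp add: V_def)
      have IH: "(\<exists>p. (\<forall>i\<in>V. p i \<ge> 0) \<and> sum p V = 1 \<and> bal V (cens U q s) p) \<and>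
     (\<forall>p p'. (\<forall>i\<in>V. p i \<ge> 0) \<and> sum p V = 1 \<and> bal V (cens U q s) p \<longrightarrow>
             (\<forall>i\<in>V. p' i \<ge> 0) \<and> sum p' V = 1 \<and> bal V (cens U q s) p' \<longrightarrow> (\<forall>i\<in>V. p i = p' i))"
        using less.IH[OF cV] fV neV pcV by blast
      have sumU: "\<And>p. sum p U = p s + sum p V"
        using f s by (simp add: V_def sum.remove)
      show ?thesis
      proof
        obtain r where r0: "\<forall>i\<in>V. r i \<ge> 0" and r1: "sum r V = 1" and rb: "bal V (cens U q s) r"
          using IH by blast
        define p where "p = (\<lambda>i. if i = s then (\<Sum>i\<in>U-{s}. r i * q i s) / dd U q s else r i)"
        have pb: "bal U q p" unfolding p_def
          by (rule cens_bal_fwd[OF f s dn]) (use rb in \<open>simp add: V_def\<close>)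
        have ps0: "p s \<ge> 0" unfolding p_def using r0 dpos pc s
          by (auto simp: V_def pc_def intro!: divide_nonneg_pos sum_nonneg mult_nonneg_nonneg)
        have pV: "sum p V = 1" using r1 by (simp add: p_def V_def)
        have p0: "\<forall>i\<in>U. p i \<ge> 0" using ps0 r0 by (auto simp: p_def V_def)
        define T where "T = sum p U"
        have T: "T = p s + 1" using sumU[of p] pV by (simp add: T_def)
        have Tp: "T > 0" using T ps0 by simp
        show "\<exists>p. (\<forall>i\<in>U. p i \<ge> 0) \<and> sum p U = 1 \<and> bal U q p"
        proof (intro exI conjI)
          show "\<forall>i\<in>U. (1/T) * p i \<ge> 0" using p0 Tp by simp
          show "(\<Sum>i\<in>U. (1/T) * p i) = 1" using Tp by (simp add: sum_divide_distrib[symmetric] T_def)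
          show "bal U q (\<lambda>i. (1/T) * p i)" by (rule bal_scale[OF pb])
        qed
      next
        {
          fix p assume p0: "\<forall>i\<in>U. p i \<ge> 0" and p1: "sum p U = 1" and pb: "bal U q p"
          have hs: "p s * dd U q s = (\<Sum>i\<in>V. p i * q i s)" using bal_at_s[OF pb s] by (simp add: V_def)
          have bV: "bal V (cens U q s) p" using cens_bal_back[OF f s dn pb] by (simp add: V_def)
          have SP: "sum p V > 0"
          proof (rule ccontr)
            assume "\<not> sum p V > 0"
            then have "sum p V = 0" using p0 sum_nonneg[of V p] by (force simp: V_def)
            then have z: "\<forall>i\<in>V. p i = 0" using sum_nonneg_eq_0_iff[OF fV] p0 by (auto simp: V_def)
            then have "(\<Sum>i\<in>V. p i * q i s) = 0" by simp
            then have "p s = 0" using hs dn by simp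
            then show False using p1 sumU[of p] \<open>sum p V = 0\<close> by simp
          qed
          have "(\<forall>i\<in>V. (1 / sum p V) * p i \<ge> 0) \<and> (\<Sum>i\<in>V. (1 / sum p V) * p i) = 1 \<and>
                bal V (cens U q s) (\<lambda>i. (1 / sum p V) * p i)"
          proof (intro conjI)
            show "\<forall>i\<in>V. (1 / sum p V) * p i \<ge> 0" using SP p0 by (auto simp: V_def)
            show "(\<Sum>i\<in>V. (1 / sum p V) * p i) = 1" using SP by (simp add: sum_divide_distrib[symmetric])
            show "bal V (cens U q s) (\<lambda>i. (1 / sum p V) * p i)" by (rule bal_scale[OF bV])
          qed
          note this hs SP
        } note P = this
        show "\<forall>p p'. (\<forall>i\<in>U. p i \<ge> 0) \<and> sum p U = 1 \<and> bal U q p \<longrightarrow>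
             (\<forall>i\<in>U. p' i \<ge> 0) \<and> sum p' U = 1 \<and> bal U q p' \<longrightarrow> (\<forall>i\<in>U. p i = p' i)"
        proof (intro allI impI)
          fix p p' assume A: "(\<forall>i\<in>U. p i \<ge> 0) \<and> sum p U = 1 \<and> bal U q p"
            and B: "(\<forall>i\<in>U. p' i \<ge> 0) \<and> sum p' U = 1 \<and> bal U q p'"
          from A have A0: "\<forall>i\<in>U. p i \<ge> 0" and A1: "sum p U = 1" and A2: "bal U q p" by auto
          from B have B0: "\<forall>i\<in>U. p' i \<ge> 0" and B1: "sum p' U = 1" and B2: "bal U q p'" by auto
          note PA1 = P(1)[OF A0 A1 A2] and PA2 = P(2)[OF A0 A1 A2] and PA3 = P(3)[OF A0 A1 A2]
          note PB1 = P(1)[OF B0 B1 B2] and PB2 = P(2)[OF B0 B1 B2] and PB3 = P(3)[OF B0 B1 B2]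
          define S where "S = sum p V"
          define S' where "S' = sum p' V"
          have Sp: "S > 0" "S' > 0" using PA3 PB3 by (auto simp: S_def S'_def)
          have eqV0: "\<forall>i\<in>V. (1/S) * p i = (1/S') * p' i"
            using IH[THEN conjunct2, rule_format, OF PA1 PB1] unfolding S_def S'_def by blast
          have eqV: "\<forall>i\<in>V. (1/S) * p i = (1/S') * p' i" by (rule eqV0)
          define c where "c = S / S'"
          have cV: "\<forall>i\<in>V. p i = c * p' i"
          proof
            fix i assume "i \<in> V"
            with eqV have "(1/S) * p i = (1/S') * p' i" by blast
            then show "p i = c * p' i" using Sp by (simp add: c_def field_simps)
          qed
          have "(\<Sum>i\<in>V. p i * q i s) = (\<Sum>i\<in>V. c * (p' i * q i s))"
            by (rule sum.cong) (use cV in auto)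
          then have "p s * dd U q s = c * (p' s * dd U q s)"
            using PA2 PB2 by (simp add: sum_distrib_left)
          then have cs: "p s = c * p' s" using dn by simp
          have "sum p U = c * sum p' U"
          proof -
            have "sum p V = (\<Sum>i\<in>V. c * p' i)" by (rule sum.cong) (use cV in auto)
            then show ?thesis using sumU[of p] sumU[of p'] cs by (simp add: sum_distrib_left distrib_left)
          qed
          then have c1: "c = 1" using A1 B1 by simp
          show "\<forall>i\<in>U. p i = p' i"
            using cV cs c1 by (auto simp: V_def)
        qed
      qed
    qed
  qed
qed


lemma bal_cong:
  assumes "\<And>i. i \<in> U \<Longrightarrow> p i = p' i" "bal U q p"
  shows "bal U q p'"
proof -
  have "\<And>j. j \<in> U \<Longrightarrow> (\<Sum>i\<in>U-{j}. p i * q i j) = (\<Sum>i\<in>U-{j}. p' i * q i j)"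
    by (rule sum.cong) (use assms(1) in auto)
  then show ?thesis using assms unfolding bal_def by auto
qed

lemma pcmc_pi_char:
  assumes f: "finite U" and ne: "U \<noteq> {}" and pc: "pc U q"
  shows "stationary_dist U q (pcmc_pi U q) \<and> (\<forall>p. stationary_dist U q p \<longrightarrow> p = pcmc_pi U q)"
proof -
  note M = main_ind[rule_format, OF refl f ne pc]
  obtain p0 where p00: "\<forall>i\<in>U. p0 i \<ge> 0" and p01: "sum p0 U = 1" and p0b: "bal U q p0"
    using M by blast
  define p where "p = (\<lambda>i. if i \<in> U then p0 i else 0)"
  have sp: "stationary_dist U q p"
    unfolding stat_iff[OF f]
  proof (intro conjI)
    show "\<forall>i\<in>U. 0 \<le> p i" using p00 by (simp add: p_def)
    show "\<forall>i. i \<notin> U \<longrightarrow> p i = 0" by (simp add: p_def)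
    show "sum p U = 1" using p01 by (simp add: p_def)
    show "bal U q p" by (rule bal_cong[OF _ p0b]) (simp add: p_def)
  qed
  have uq: "\<And>p'. stationary_dist U q p' \<Longrightarrow> p' = p"
  proof
    fix p' x assume s': "stationary_dist U q p'"
    show "p' x = p x"
    proof (cases "x \<in> U")
      case True
      have "\<forall>i\<in>U. p' i = p i"
        using M[THEN conjunct2, rule_format, of p' p] s' sp unfolding stat_iff[OF f] by blast
      then show ?thesis using True by simp
    next
      case False
      then show ?thesis using s' sp unfolding stat_iff[OF f] by simp
    qed
  qed
  have ex1: "\<exists>!p. stationary_dist U q p" using sp uq by blast
  have "stationary_dist U q (pcmc_pi U q)"
    unfolding pcmc_pi_def by (rule theI'[OF ex1])
  then show ?thesis using uq by metis
qed

lemma sum_split_prod: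
  assumes "finite A" "finite K" "a \<in> A" "b \<in> K"
  shows "(\<Sum>y\<in>A \<times> K - {(a,b)}. f y) = (\<Sum>m\<in>A-{a}. \<Sum>j\<in>K. f (m,j)) + (\<Sum>j\<in>K-{b}. f (a,j))"
proof -
  have e: "A \<times> K - {(a,b)} = ((A-{a}) \<times> K) \<union> ({a} \<times> (K-{b}))" using assms by auto
  have "(\<Sum>y\<in>A \<times> K - {(a,b)}. f y) = (\<Sum>y\<in>(A-{a}) \<times> K. f y) + (\<Sum>y\<in>{a} \<times> (K-{b}). f y)"
    unfolding e using assms by (intro sum.union_disjoint) auto
  also have "(\<Sum>y\<in>(A-{a}) \<times> K. f y) = (\<Sum>m\<in>A-{a}. \<Sum>j\<in>K. f (m,j))"
    by (simp add: sum.cartesian_product)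
  also have "(\<Sum>y\<in>{a} \<times> (K-{b}). f y) = (\<Sum>m\<in>{a}. \<Sum>j\<in>K-{b}. f (m,j))"
    by (simp add: sum.cartesian_product)
  finally show ?thesis by simp
qed

theorem proposition4:
  fixes n k :: nat
    and q :: "nat \<Rightarrow> nat \<Rightarrow> real"
    and qk :: "nat \<times> nat \<Rightarrow> nat \<times> nat \<Rightarrow> real"
  assumes "k \<ge> 1"
    and "pcmc_rates {1..n} q"
    and "pcmc_rates ({1..n} \<times> {1..k}) qk"
    and "\<And>m m' j j'. m \<in> {1..n} \<Longrightarrow> m' \<in> {1..n} \<Longrightarrow> j \<in> {1..k} \<Longrightarrow> j' \<in> {1..k} \<Longrightarrow>
           m \<noteq> m' \<Longrightarrow> qk (m, j) (m', j') = q m m'"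
    and "\<And>m j j'. m \<in> {1..n} \<Longrightarrow> j \<in> {1..k} \<Longrightarrow> j' \<in> {1..k} \<Longrightarrow>
           j \<noteq> j' \<Longrightarrow> qk (m, j) (m, j') = qk (m, j') (m, j)"
  shows "\<forall>m\<in>{1..n}. pcmc_prob {1..n} q m = (\<Sum>j=1..k. pcmc_prob ({1..n} \<times> {1..k}) qk (m, j))"
proof
  fix m0 assume m0: "m0 \<in> {1..n}"
  define U where "U = {1..n::nat}"
  define K where "K = {1..k::nat}"
  have fU: "finite U" and fK: "finite K" by (simp_all add: U_def K_def)
  have neU: "U \<noteq> {}" using m0 by (auto simp: U_def)
  have neK: "K \<noteq> {}" using assms(1) by (auto simp: K_def)
  have cK: "card K = k" by (simp add: K_def)
  have kpos: "real k > 0" using assms(1) by simp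
  have pcU: "pc U q" using assms(2) by (simp add: pcmc_rates_def pc_def U_def)
  have pcUK: "pc (U \<times> K) qk" using assms(3) by (simp add: pcmc_rates_def pc_def U_def K_def)
  define p1 where "p1 = pcmc_pi U q"
  have st1: "stationary_dist U q p1" using pcmc_pi_char[OF fU neU pcU] by (simp add: p1_def)
  then have p10: "\<forall>i\<in>U. p1 i \<ge> 0" and p11: "sum p1 U = 1" and p1b: "bal U q p1"
    unfolding stat_iff[OF fU] by auto
  define p where "p = (\<lambda>x. if x \<in> U \<times> K then p1 (fst x) / real k else 0)"
  have stk: "stationary_dist (U \<times> K) qk p"
    unfolding stat_iff[OF finite_cartesian_product[OF fU fK]]
  proof (intro conjI)
    show "\<forall>i\<in>U \<times> K. 0 \<le> p i" using p10 by (auto simp: p_def)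
    show "\<forall>i. i \<notin> U \<times> K \<longrightarrow> p i = 0" by (simp add: p_def)
    have "sum p (U \<times> K) = (\<Sum>m\<in>U. \<Sum>j\<in>K. p (m,j))" by (simp add: sum.cartesian_product)
    also have "\<dots> = (\<Sum>m\<in>U. p1 m)"
      by (rule sum.cong) (use kpos cK in \<open>auto simp: p_def\<close>)
    finally show "sum p (U \<times> K) = 1" using p11 by simp
    show "bal (U \<times> K) qk p"
      unfolding bal_def
    proof
      fix x assume x: "x \<in> U \<times> K"
      obtain a b where ab: "x = (a,b)" "a \<in> U" "b \<in> K" using x by auto
      have L1: "(\<Sum>m\<in>U-{a}. \<Sum>j\<in>K. p (m,j) * qk (m,j) (a,b)) = (\<Sum>m\<in>U-{a}. p1 m * q m a)"
      proof (rule sum.cong)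
        fix m assume m: "m \<in> U - {a}"
        have "(\<Sum>j\<in>K. p (m,j) * qk (m,j) (a,b)) = (\<Sum>j\<in>K. p1 m / real k * q m a)"
          by (rule sum.cong) (use m ab assms(4) in \<open>auto simp: p_def U_def K_def\<close>)
        then show "(\<Sum>j\<in>K. p (m,j) * qk (m,j) (a,b)) = p1 m * q m a" using cK kpos by simp
      qed simp
      have L2: "(\<Sum>j\<in>K-{b}. p (a,j) * qk (a,j) (a,b)) = p1 a / real k * (\<Sum>j\<in>K-{b}. qk (a,b) (a,j))"
        unfolding sum_distrib_left
        by (rule sum.cong) (use ab assms(5) in \<open>auto simp: p_def U_def K_def\<close>)
      have R1: "(\<Sum>m\<in>U-{a}. \<Sum>j\<in>K. qk (a,b) (m,j)) = real k * (\<Sum>m\<in>U-{a}. q a m)"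
        unfolding sum_distrib_left
      proof (rule sum.cong)
        fix m assume m: "m \<in> U - {a}"
        have "(\<Sum>j\<in>K. qk (a,b) (m,j)) = (\<Sum>j\<in>K. q a m)"
          by (rule sum.cong) (use m ab assms(4) in \<open>auto simp: U_def K_def\<close>)
        then show "(\<Sum>j\<in>K. qk (a,b) (m,j)) = real k * q a m" using cK by simp
      qed simp
      have bal1: "(\<Sum>m\<in>U-{a}. p1 m * q m a) = p1 a * (\<Sum>m\<in>U-{a}. q a m)"
        using p1b ab by (simp add: bal_def)
      have "(\<Sum>i\<in>U \<times> K - {x}. p i * qk i x)
          = (\<Sum>m\<in>U-{a}. p1 m * q m a) + p1 a / real k * (\<Sum>j\<in>K-{b}. qk (a,b) (a,j))"
        using sum_split_prod[OF fU fK ab(2,3), of "\<lambda>i. p i * qk i (a,b)"] L1 L2 ab(1) by simp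
      also have "\<dots> = p (a,b) * ((\<Sum>m\<in>U-{a}. \<Sum>j\<in>K. qk (a,b) (m,j)) + (\<Sum>j\<in>K-{b}. qk (a,b) (a,j)))"
        unfolding R1 bal1 using ab kpos by (simp add: p_def field_simps)
      also have "\<dots> = p x * (\<Sum>k\<in>U \<times> K - {x}. qk x k)"
        using sum_split_prod[OF fU fK ab(2,3), of "\<lambda>y. qk (a,b) y"] ab(1) by simp
      finally show "(\<Sum>i\<in>U \<times> K - {x}. p i * qk i x) = p x * (\<Sum>k\<in>U \<times> K - {x}. qk x k)" .
    qed
  qed
  have neUK: "U \<times> K \<noteq> {}" using neU neK by simp
  have pk: "pcmc_pi (U \<times> K) qk = p"
    using pcmc_pi_char[OF finite_cartesian_product[OF fU fK] neUK pcUK] stk by metis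
  have "(\<Sum>j\<in>K. p (m0,j)) = (\<Sum>j\<in>K. p1 m0 / real k)"
    by (rule sum.cong) (use m0 in \<open>auto simp: p_def U_def\<close>)
  also have "\<dots> = p1 m0" using cK kpos by simp
  finally have eqs: "(\<Sum>j\<in>K. p (m0,j)) = p1 m0" .
  show "pcmc_prob {1..n} q m0 = (\<Sum>j=1..k. pcmc_prob ({1..n} \<times> {1..k}) qk (m0, j))"
  proof -
    have pk': "pcmc_pi ({1..n} \<times> {1..k}) qk = p" using pk by (simp add: U_def K_def)
    have p1': "pcmc_pi {1..n} q = p1" by (simp add: p1_def U_def)
    show ?thesis using eqs unfolding pcmc_prob_def pk' p1' by (simp add: K_def)
  qed
qed

end
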